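(* Let $A$ be a finite dimensional algebra over a field and $\underline{M}=(M,M')$ a bonded pair of $A$-$A$-bimodules. Then the space $\mathbb{T}_A(\underline{M})=\bigoplus_{i\ge1}M^{\otimes_Ai}\oplus A\oplus\bigoplus_{i\le-1}M'^{\otimes_A -i}$ (with $A$ in degree $0$, $M^{\otimes_A i}$ in degree $i$, $M'^{\otimes_A -i}$ in degree $i<0$) is a $\mathbb{Z}$-graded algebra, whose product of an element of degree $i_1$ with an element of degree $i_2$ is the natural bimodule homomorphism into the degree $i_1+i_2$ component obtained by concatenating tensors and applying the bonding maps $M\otimes_AM'\to A$, $M'\otimes_AM\to A$ to adjacent factors as many times as possible (with $M^{\otimes_A0}=M'^{\otimes_A0}=A$).
   Context: A pair $\underline M=(M,M')$ of $A$-$A$-bimodules is bonded if there are bimodule homomorphisms $M\otimes_AM'\to A$ and $M'\otimes_AM\to A$ such that the two resulting maps $M\otimes_AM'\otimes_AM\to M$ are equal and the two resulting maps $M'\otimes_AM\otimes_AM'\to M'$ are equal. *)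

theory Defs
  imports Main
begin

definition k_algebra :: "('k::field \<Rightarrow> 'a::ring_1) \<Rightarrow> bool" where
  "k_algebra \<phi> \<longleftrightarrow>
     (\<forall>c d. \<phi> (c + d) = \<phi> c + \<phi> d) \<and> (\<forall>c d. \<phi> (c * d) = \<phi> c * \<phi> d) \<and> \<phi> 1 = 1 \<and>
     (\<forall>c a. \<phi> c * a = a * \<phi> c)"

definition fin_dim_algebra :: "('k::field \<Rightarrow> 'a::ring_1) \<Rightarrow> bool" where
  "fin_dim_algebra \<phi> \<longleftrightarrow> k_algebra \<phi> \<and>
     (\<exists>B. finite B \<and> (\<forall>a. \<exists>c. a = (\<Sum>b\<in>B. \<phi> (c b) * b)))"

definition bimodule :: "('k::field \<Rightarrow> 'a::ring_1) \<Rightarrow> ('a \<Rightarrow> 'm::ab_group_add \<Rightarrow> 'm)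
    \<Rightarrow> ('m \<Rightarrow> 'a \<Rightarrow> 'm) \<Rightarrow> bool" where
  "bimodule \<phi> l r \<longleftrightarrow>
     (\<forall>a x y. l a (x + y) = l a x + l a y) \<and> (\<forall>a b x. l (a + b) x = l a x + l b x) \<and>
     (\<forall>a b x. l (a * b) x = l a (l b x)) \<and> (\<forall>x. l 1 x = x) \<and>
     (\<forall>a x y. r (x + y) a = r x a + r y a) \<and> (\<forall>a b x. r x (a + b) = r x a + r x b) \<and>
     (\<forall>a b x. r x (a * b) = r (r x a) b) \<and> (\<forall>x. r x 1 = x) \<and>
     (\<forall>a b x. l a (r x b) = r (l a x) b) \<and>
     (\<forall>c x. l (\<phi> c) x = r x (\<phi> c))"

text \<open>A bimodule homomorphism M \<otimes>_A N \<rightarrow> A, given (via the universal property of the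
  tensor product over A) by an A-balanced biadditive map beta with beta(a x, y) = a beta(x,y)
  and beta(x, y a) = beta(x,y) a.\<close>
definition bimod_pairing :: "('a::ring_1 \<Rightarrow> 'm::ab_group_add \<Rightarrow> 'm) \<Rightarrow> ('m \<Rightarrow> 'a \<Rightarrow> 'm)
    \<Rightarrow> ('a \<Rightarrow> 'n::ab_group_add \<Rightarrow> 'n) \<Rightarrow> ('n \<Rightarrow> 'a \<Rightarrow> 'n) \<Rightarrow> ('m \<Rightarrow> 'n \<Rightarrow> 'a) \<Rightarrow> bool" where
  "bimod_pairing lM rM lN rN \<beta> \<longleftrightarrow>
     (\<forall>x x' y. \<beta> (x + x') y = \<beta> x y + \<beta> x' y) \<and>
     (\<forall>x y y'. \<beta> x (y + y') = \<beta> x y + \<beta> x y') \<and>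
     (\<forall>x a y. \<beta> (rM x a) y = \<beta> x (lN a y)) \<and>
     (\<forall>a x y. \<beta> (lM a x) y = a * \<beta> x y) \<and>
     (\<forall>x y a. \<beta> x (rN y a) = \<beta> x y * a)"

definition bonded :: "('a::ring_1 \<Rightarrow> 'm::ab_group_add \<Rightarrow> 'm) \<Rightarrow> ('m \<Rightarrow> 'a \<Rightarrow> 'm)
    \<Rightarrow> ('a \<Rightarrow> 'n::ab_group_add \<Rightarrow> 'n) \<Rightarrow> ('n \<Rightarrow> 'a \<Rightarrow> 'n)
    \<Rightarrow> ('m \<Rightarrow> 'n \<Rightarrow> 'a) \<Rightarrow> ('n \<Rightarrow> 'm \<Rightarrow> 'a) \<Rightarrow> bool" where
  "bonded lM rM lN rN \<beta> \<beta>' \<longleftrightarrow>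
     bimod_pairing lM rM lN rN \<beta> \<and> bimod_pairing lN rN lM rM \<beta>' \<and>
     (\<forall>x y x'. lM (\<beta> x y) x' = rM x (\<beta>' y x')) \<and>
     (\<forall>y x y'. lN (\<beta>' y x) y' = rN y (\<beta> x y'))"

text \<open>Generators: G0 a in degree 0 (an element of A), GP [x1,...,xi] = x1 \<otimes> ... \<otimes> xi
  in degree i \<ge> 1, GN [y1,...,yj] = y1 \<otimes> ... \<otimes> yj in degree -j \<le> -1.\<close>
datatype ('a, 'm, 'n) gen = G0 'a | GP "'m list" | GN "'n list"

fun valid_gen :: "('a, 'm, 'n) gen \<Rightarrow> bool" where
  "valid_gen (G0 a) = True"
| "valid_gen (GP xs) = (xs \<noteq> [])"
| "valid_gen (GN ys) = (ys \<noteq> [])"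

fun gdeg :: "('a, 'm, 'n) gen \<Rightarrow> int" where
  "gdeg (G0 a) = 0"
| "gdeg (GP xs) = int (length xs)"
| "gdeg (GN ys) = - int (length ys)"

text \<open>cwP rM lN beta rxs a ys represents (rev rxs) \<otimes> a \<otimes> ys with all possible
  contractions M \<otimes> M' \<rightarrow> A carried out.\<close>
fun cwP :: "('m \<Rightarrow> 'a \<Rightarrow> 'm) \<Rightarrow> ('a \<Rightarrow> 'n \<Rightarrow> 'n) \<Rightarrow> ('m \<Rightarrow> 'n \<Rightarrow> 'a)
    \<Rightarrow> 'm list \<Rightarrow> 'a \<Rightarrow> 'n list \<Rightarrow> ('a, 'm, 'n) gen" where
  "cwP rM lN \<beta> [] a [] = G0 a"
| "cwP rM lN \<beta> [] a (y # ys) = GN (lN a y # ys)"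
| "cwP rM lN \<beta> (x # rxs) a [] = GP (rev rxs @ [rM x a])"
| "cwP rM lN \<beta> (x # rxs) a (y # ys) = cwP rM lN \<beta> rxs (\<beta> (rM x a) y) ys"

fun cwN :: "('n \<Rightarrow> 'a \<Rightarrow> 'n) \<Rightarrow> ('a \<Rightarrow> 'm \<Rightarrow> 'm) \<Rightarrow> ('n \<Rightarrow> 'm \<Rightarrow> 'a)
    \<Rightarrow> 'n list \<Rightarrow> 'a \<Rightarrow> 'm list \<Rightarrow> ('a, 'm, 'n) gen" where
  "cwN rN lM \<beta>' [] a [] = G0 a"
| "cwN rN lM \<beta>' [] a (x # xs) = GP (lM a x # xs)"
| "cwN rN lM \<beta>' (y # rys) a [] = GN (rev rys @ [rN y a])"
| "cwN rN lM \<beta>' (y # rys) a (x # xs) = cwN rN lM \<beta>' rys (\<beta>' (rN y a) x) xs"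

fun gmult :: "('a::ring_1 \<Rightarrow> 'm \<Rightarrow> 'm) \<Rightarrow> ('m \<Rightarrow> 'a \<Rightarrow> 'm)
    \<Rightarrow> ('a \<Rightarrow> 'n \<Rightarrow> 'n) \<Rightarrow> ('n \<Rightarrow> 'a \<Rightarrow> 'n)
    \<Rightarrow> ('m \<Rightarrow> 'n \<Rightarrow> 'a) \<Rightarrow> ('n \<Rightarrow> 'm \<Rightarrow> 'a)
    \<Rightarrow> ('a, 'm, 'n) gen \<Rightarrow> ('a, 'm, 'n) gen \<Rightarrow> ('a, 'm, 'n) gen" where
  "gmult lM rM lN rN \<beta> \<beta>' (G0 a) (G0 b) = G0 (a * b)"
| "gmult lM rM lN rN \<beta> \<beta>' (G0 a) (GP xs) = cwN rN lM \<beta>' [] a xs"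
| "gmult lM rM lN rN \<beta> \<beta>' (G0 a) (GN ys) = cwP rM lN \<beta> [] a ys"
| "gmult lM rM lN rN \<beta> \<beta>' (GP xs) (G0 a) = cwP rM lN \<beta> (rev xs) a []"
| "gmult lM rM lN rN \<beta> \<beta>' (GN ys) (G0 a) = cwN rN lM \<beta>' (rev ys) a []"
| "gmult lM rM lN rN \<beta> \<beta>' (GP xs) (GP xs') = GP (xs @ xs')"
| "gmult lM rM lN rN \<beta> \<beta>' (GN ys) (GN ys') = GN (ys @ ys')"
| "gmult lM rM lN rN \<beta> \<beta>' (GP xs) (GN ys) = cwP rM lN \<beta> (rev xs) 1 ys"
| "gmult lM rM lN rN \<beta> \<beta>' (GN ys) (GP xs) = cwN rN lM \<beta>' (rev ys) 1 xs"

text \<open>Elements of the free abelian group on the (valid) generators.\<close>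
definition free_el :: "(('a, 'm, 'n) gen \<Rightarrow> int) \<Rightarrow> bool" where
  "free_el f \<longleftrightarrow> finite {u. f u \<noteq> 0} \<and> (\<forall>u. f u \<noteq> 0 \<longrightarrow> valid_gen u)"

definition single :: "'b \<Rightarrow> 'b \<Rightarrow> int" where
  "single u = (\<lambda>w. if w = u then 1 else 0)"

definition fadd :: "('b \<Rightarrow> int) \<Rightarrow> ('b \<Rightarrow> int) \<Rightarrow> 'b \<Rightarrow> int" where
  "fadd f g = (\<lambda>w. f w + g w)"

definition fdiff :: "('b \<Rightarrow> int) \<Rightarrow> ('b \<Rightarrow> int) \<Rightarrow> 'b \<Rightarrow> int" where
  "fdiff f g = (\<lambda>w. f w - g w)"

definition fmult :: "('b \<Rightarrow> 'b \<Rightarrow> 'b) \<Rightarrow> ('b \<Rightarrow> int) \<Rightarrow> ('b \<Rightarrow> int) \<Rightarrow> 'b \<Rightarrow> int" where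
  "fmult gm f g = (\<lambda>w. \<Sum>(u, v) \<in> {(u, v). f u \<noteq> 0 \<and> g v \<noteq> 0 \<and> gm u v = w}. f u * g v)"

inductive_set zspan :: "('b \<Rightarrow> int) set \<Rightarrow> ('b \<Rightarrow> int) set" for R where
  zspan_zero: "(\<lambda>_. 0) \<in> zspan R"
| zspan_gen: "r \<in> R \<Longrightarrow> r \<in> zspan R"
| zspan_diff: "f \<in> zspan R \<Longrightarrow> g \<in> zspan R \<Longrightarrow> fdiff f g \<in> zspan R"

text \<open>The quotient of the free abelian group
  on the generators of degree i by these relations is M^{\<otimes>_A i}, A, resp. M'^{\<otimes>_A -i}.\<close>
definition tensor_rels :: "('a::ring_1 \<Rightarrow> 'm::ab_group_add \<Rightarrow> 'm) \<Rightarrow> ('m \<Rightarrow> 'a \<Rightarrow> 'm)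
    \<Rightarrow> ('a \<Rightarrow> 'n::ab_group_add \<Rightarrow> 'n) \<Rightarrow> ('n \<Rightarrow> 'a \<Rightarrow> 'n) \<Rightarrow> (('a, 'm, 'n) gen \<Rightarrow> int) set" where
  "tensor_rels lM rM lN rN =
     {fdiff (fdiff (single (G0 (a + b))) (single (G0 a))) (single (G0 b)) | a b. True}
   \<union> {fdiff (fdiff (single (GP (xs @ (x + x') # zs))) (single (GP (xs @ x # zs))))
        (single (GP (xs @ x' # zs))) | xs x x' zs. True}
   \<union> {fdiff (single (GP (xs @ rM x a # x' # zs))) (single (GP (xs @ x # lM a x' # zs)))
        | xs x a x' zs. True}
   \<union> {fdiff (fdiff (single (GN (ys @ (y + y') # zs))) (single (GN (ys @ y # zs))))
        (single (GN (ys @ y' # zs))) | ys y y' zs. True}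
   \<union> {fdiff (single (GN (ys @ rN y a # y' # zs))) (single (GN (ys @ y # lN a y' # zs)))
        | ys y a y' zs. True}"

end

theory Submission
  imports Defs "HOL-Library.Function_Algebras"
begin


definition smul :: "int \<Rightarrow> ('b \<Rightarrow> int) \<Rightarrow> 'b \<Rightarrow> int" where
  "smul k f = (\<lambda>w. k * f w)"

definition fs :: "('b \<Rightarrow> int) \<Rightarrow> bool" where
  "fs f \<longleftrightarrow> finite {u. f u \<noteq> 0}"

lemma fdiff_eq: "fdiff f g = f - g" by (auto simp: fdiff_def fun_diff_def)
lemma fadd_eq: "fadd f g = f + g" by (auto simp: fadd_def)

lemma sum_app: "(sum F A) w = (\<Sum>x\<in>A. F x w)"
  by (induct A rule: infinite_finite_induct) auto

lemma zspan_0: "0 \<in> zspan R"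
  using zspan_zero[of R] by (simp add: zero_fun_def)
lemma zspan_minus: "f \<in> zspan R \<Longrightarrow> g \<in> zspan R \<Longrightarrow> f - g \<in> zspan R"
  using zspan_diff[of f R g] by (simp add: fdiff_eq)
lemma zspan_uminus: "f \<in> zspan R \<Longrightarrow> - f \<in> zspan R"
  using zspan_minus[OF zspan_0, of f R] by simp
lemma zspan_add: "f \<in> zspan R \<Longrightarrow> g \<in> zspan R \<Longrightarrow> f + g \<in> zspan R"
  using zspan_minus[OF _ zspan_uminus, of f R g] by simp
lemma zspan_sum: "(\<And>x. x \<in> A \<Longrightarrow> F x \<in> zspan R) \<Longrightarrow> sum F A \<in> zspan R"
  by (induct A rule: infinite_finite_induct) (auto intro: zspan_0 zspan_add)

lemma smul_nat: "smul (int (Suc n)) f = smul (int n) f + f"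
  by (auto simp: smul_def algebra_simps)
lemma zspan_smul_nat: "f \<in> zspan R \<Longrightarrow> smul (int n) f \<in> zspan R"
proof (induct n)
  case 0 then show ?case using zspan_0 by (simp add: smul_def zero_fun_def)
next
  case (Suc n) then show ?case by (simp only: smul_nat zspan_add)
qed
lemma zspan_smul: "f \<in> zspan R \<Longrightarrow> smul k f \<in> zspan R"
proof (cases "k \<ge> 0")
  case True assume "f \<in> zspan R"
  then have "smul (int (nat k)) f \<in> zspan R" by (rule zspan_smul_nat)
  then show ?thesis using True by simp
next
  case False assume "f \<in> zspan R"
  then have "- smul (int (nat (-k))) f \<in> zspan R" by (intro zspan_uminus zspan_smul_nat)
  moreover have "- smul (int (nat (-k))) f = smul k f" using False by (auto simp: smul_def)
  ultimately show ?thesis by simp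
qed

lemma smul_diff: "smul k f - smul k g = smul k (f - g)"
  by (auto simp: smul_def algebra_simps)
lemma smul_sum: "smul k (sum F A) = (\<Sum>x\<in>A. smul k (F x))"
  by (rule ext) (simp add: smul_def sum_app sum_distrib_left)
lemma smul_smul: "smul a (smul b f) = smul (a * b) f"
  by (auto simp: smul_def)
lemma sum_diff_zspan: "(\<And>x. x \<in> A \<Longrightarrow> F x - G x \<in> zspan R) \<Longrightarrow> sum F A - sum G A \<in> zspan R"
  by (simp add: sum_subtractf[symmetric] zspan_sum)
lemma smul_diff_zspan: "F - G \<in> zspan R \<Longrightarrow> smul k F - smul k G \<in> zspan R"
  by (simp add: smul_diff zspan_smul)

lemma single_app: "single u w = (if w = u then 1 else 0)" by (simp add: single_def)

lemma fmult_rep: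
  assumes "finite S" "finite T" "{u. f u \<noteq> 0} \<subseteq> S" "{v. g v \<noteq> 0} \<subseteq> T"
  shows "fmult gm f g w = (\<Sum>u\<in>S. \<Sum>v\<in>T. if gm u v = w then f u * g v else 0)"
proof -
  have "(\<Sum>u\<in>S. \<Sum>v\<in>T. if gm u v = w then f u * g v else 0)
      = (\<Sum>(u,v)\<in>S \<times> T. if gm u v = w then f u * g v else 0)"
    by (rule sum.cartesian_product)
  also have "\<dots> = (\<Sum>(u,v)\<in>{(u, v). f u \<noteq> 0 \<and> g v \<noteq> 0 \<and> gm u v = w}. f u * g v)"
    by (rule sum.mono_neutral_cong_right) (use assms in \<open>auto intro: finite_cartesian_product split: if_splits\<close>)
  finally show ?thesis by (simp add: fmult_def)
qed

lemma fmult_fun: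
  assumes "finite S" "finite T" "{u. f u \<noteq> 0} \<subseteq> S" "{v. g v \<noteq> 0} \<subseteq> T"
  shows "fmult gm f g = (\<Sum>u\<in>S. \<Sum>v\<in>T. smul (f u) (smul (g v) (single (gm u v))))"
  by (rule ext) (auto simp: fmult_rep[OF assms] sum_app smul_def single_app intro!: sum.cong)

lemma fs_def2: "fs f \<longleftrightarrow> finite {u. f u \<noteq> 0}" by (simp add: fs_def)

lemma decomp: "fs f \<Longrightarrow> (\<Sum>u\<in>{u. f u \<noteq> 0}. smul (f u) (single u)) = f"
  by (rule ext) (auto simp: sum_app smul_def single_app fs_def if_distrib cong: if_cong)

lemma fs_single: "fs (single a)" by (simp add: fs_def single_app)
lemma fs_add: "fs f \<Longrightarrow> fs g \<Longrightarrow> fs (f + g)"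
  unfolding fs_def by (rule finite_subset[of _ "{u. f u \<noteq> 0} \<union> {u. g u \<noteq> 0}"]) auto
lemma fs_diff: "fs f \<Longrightarrow> fs g \<Longrightarrow> fs (f - g)"
  unfolding fs_def by (rule finite_subset[of _ "{u. f u \<noteq> 0} \<union> {u. g u \<noteq> 0}"]) auto
lemma fs_smul: "fs f \<Longrightarrow> fs (smul k f)"
  unfolding fs_def smul_def by (rule finite_subset[of _ "{u. f u \<noteq> 0}"]) auto
lemma fs_zero: "fs 0" by (simp add: fs_def)
lemma fs_sum: "(\<And>x. x \<in> A \<Longrightarrow> fs (F x)) \<Longrightarrow> fs (sum F A)"
  by (induct A rule: infinite_finite_induct) (auto intro: fs_add fs_zero)

lemma fmult_supp:
  assumes "fs f" "fs g"
  shows "fmult gm f g = (\<Sum>u\<in>{u. f u \<noteq> 0}. \<Sum>v\<in>{v. g v \<noteq> 0}. smul (f u) (smul (g v) (single (gm u v))))"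
  using assms by (intro fmult_fun) (auto simp: fs_def)

lemma fs_fmult: "fs f \<Longrightarrow> fs g \<Longrightarrow> fs (fmult gm f g)"
  by (simp add: fmult_supp fs_sum fs_smul fs_single)

lemma supp_sub_fin: "finite S \<Longrightarrow> {u. f u \<noteq> 0} \<subseteq> S \<Longrightarrow> fs f"
  unfolding fs_def by (rule finite_subset)

lemma fmult_lin1:
  assumes "finite S" "{u. f u \<noteq> 0} \<subseteq> S" "fs h"
  shows "fmult gm f h = (\<Sum>u\<in>S. smul (f u) (\<Sum>v\<in>{v. h v \<noteq> 0}. smul (h v) (single (gm u v))))"
  using assms by (subst fmult_fun[of S "{v. h v \<noteq> 0}"]) (auto simp: fs_def smul_sum)

lemma fmult_lin2:
  assumes "finite T" "{u. h u \<noteq> 0} \<subseteq> T" "fs f"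
  shows "fmult gm f h = (\<Sum>v\<in>T. smul (h v) (\<Sum>u\<in>{u. f u \<noteq> 0}. smul (f u) (single (gm u v))))"
proof -
  have "fmult gm f h = (\<Sum>u\<in>{u. f u \<noteq> 0}. \<Sum>v\<in>T. smul (f u) (smul (h v) (single (gm u v))))"
    using assms by (intro fmult_fun) (auto simp: fs_def)
  also have "\<dots> = (\<Sum>v\<in>T. \<Sum>u\<in>{u. f u \<noteq> 0}. smul (h v) (smul (f u) (single (gm u v))))"
    by (subst sum.swap) (simp add: smul_smul mult.commute)
  finally show ?thesis by (simp add: smul_sum)
qed

lemma smul_add_left: "smul (a + b) F = smul a F + smul b F"
  by (auto simp: smul_def algebra_simps)
lemma smul_diff_left: "smul (a - b) F = smul a F - smul b F"
  by (auto simp: smul_def algebra_simps)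
lemma smul_zero_left: "smul 0 F = 0" by (auto simp: smul_def)
lemma smul_one: "smul 1 F = F" by (auto simp: smul_def)
lemma smul_zero_right: "smul k 0 = 0" by (auto simp: smul_def)

lemma fmult_add1:
  assumes "fs f" "fs g" "fs h"
  shows "fmult gm (f + g) h = fmult gm f h + fmult gm g h"
proof -
  let ?S = "{u. f u \<noteq> 0} \<union> {u. g u \<noteq> 0}"
  have fin: "finite ?S" using assms by (simp add: fs_def)
  show ?thesis
    using assms fin
    by (simp add: fmult_lin1[OF fin _ \<open>fs h\<close>, of "f+g"] fmult_lin1[OF fin _ \<open>fs h\<close>, of f]
        fmult_lin1[OF fin _ \<open>fs h\<close>, of g] smul_add_left sum.distrib subset_iff)
qed

lemma fmult_diff1:
  assumes "fs f" "fs g" "fs h"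
  shows "fmult gm (f - g) h = fmult gm f h - fmult gm g h"
proof -
  let ?S = "{u. f u \<noteq> 0} \<union> {u. g u \<noteq> 0}"
  have fin: "finite ?S" using assms by (simp add: fs_def)
  show ?thesis
    using assms fin
    by (simp add: fmult_lin1[OF fin _ \<open>fs h\<close>, of "f-g"] fmult_lin1[OF fin _ \<open>fs h\<close>, of f]
        fmult_lin1[OF fin _ \<open>fs h\<close>, of g] smul_diff_left sum_subtractf subset_iff)
qed

lemma fmult_add2:
  assumes "fs f" "fs g" "fs h"
  shows "fmult gm h (f + g) = fmult gm h f + fmult gm h g"
proof -
  let ?S = "{u. f u \<noteq> 0} \<union> {u. g u \<noteq> 0}"
  have fin: "finite ?S" using assms by (simp add: fs_def)
  show ?thesis
    using assms fin
    by (simp add: fmult_lin2[OF fin _ \<open>fs h\<close>, of "f+g"] fmult_lin2[OF fin _ \<open>fs h\<close>, of f]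
        fmult_lin2[OF fin _ \<open>fs h\<close>, of g] smul_add_left sum.distrib subset_iff)
qed

lemma fmult_diff2:
  assumes "fs f" "fs g" "fs h"
  shows "fmult gm h (f - g) = fmult gm h f - fmult gm h g"
proof -
  let ?S = "{u. f u \<noteq> 0} \<union> {u. g u \<noteq> 0}"
  have fin: "finite ?S" using assms by (simp add: fs_def)
  show ?thesis
    using assms fin
    by (simp add: fmult_lin2[OF fin _ \<open>fs h\<close>, of "f-g"] fmult_lin2[OF fin _ \<open>fs h\<close>, of f]
        fmult_lin2[OF fin _ \<open>fs h\<close>, of g] smul_diff_left sum_subtractf subset_iff)
qed

lemma fmult_smul1:
  assumes "fs f" "fs h"
  shows "fmult gm (smul k f) h = smul k (fmult gm f h)"
proof -
  let ?S = "{u. f u \<noteq> 0}"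
  have fin: "finite ?S" using assms by (simp add: fs_def)
  have sub: "{u. smul k f u \<noteq> 0} \<subseteq> ?S" by (auto simp: smul_def)
  show ?thesis
    unfolding fmult_lin1[OF fin sub \<open>fs h\<close>] fmult_lin1[OF fin _ \<open>fs h\<close>, of f, simplified]
    by (simp add: smul_sum smul_smul) (simp add: smul_def mult_ac)
qed

lemma fmult_smul2:
  assumes "fs f" "fs h"
  shows "fmult gm h (smul k f) = smul k (fmult gm h f)"
proof -
  let ?S = "{u. f u \<noteq> 0}"
  have fin: "finite ?S" using assms by (simp add: fs_def)
  have sub: "{u. smul k f u \<noteq> 0} \<subseteq> ?S" by (auto simp: smul_def)
  show ?thesis
    unfolding fmult_lin2[OF fin sub \<open>fs h\<close>] fmult_lin2[OF fin _ \<open>fs h\<close>, of f, simplified]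
    by (simp add: smul_sum smul_smul) (simp add: smul_def mult_ac)
qed

lemma fmult_zero1: "fmult gm 0 h = 0" by (auto simp: fmult_def)
lemma fmult_zero2: "fmult gm h 0 = 0" by (auto simp: fmult_def)

lemma fmult_sum1:
  assumes "\<And>x. x \<in> A \<Longrightarrow> fs (F x)" "fs h"
  shows "fmult gm (sum F A) h = (\<Sum>x\<in>A. fmult gm (F x) h)"
  using assms by (induct A rule: infinite_finite_induct) (auto simp: fmult_zero1 fmult_add1 fs_sum)

lemma fmult_sum2:
  assumes "\<And>x. x \<in> A \<Longrightarrow> fs (F x)" "fs h"
  shows "fmult gm h (sum F A) = (\<Sum>x\<in>A. fmult gm h (F x))"
  using assms by (induct A rule: infinite_finite_induct) (auto simp: fmult_zero2 fmult_add2 fs_sum)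

lemma fmult_single: "fmult gm (single a) (single b) = single (gm a b)"
  by (subst fmult_fun[of "{a}" "{b}"]) (auto simp: single_app smul_one)

lemma fmult_single_left:
  "fs h \<Longrightarrow> fmult gm (single a) h = (\<Sum>v\<in>{v. h v \<noteq> 0}. smul (h v) (single (gm a v)))"
  by (subst fmult_lin1[of "{a}"]) (auto simp: single_app smul_one fs_def)

lemma fmult_single_right:
  "fs f \<Longrightarrow> fmult gm f (single b) = (\<Sum>u\<in>{u. f u \<noteq> 0}. smul (f u) (single (gm u b)))"
  by (subst fmult_lin2[of "{b}"]) (auto simp: single_app smul_one fs_def)


definition supp_in :: "('b \<Rightarrow> bool) \<Rightarrow> ('b \<Rightarrow> int) \<Rightarrow> bool" where
  "supp_in P f \<longleftrightarrow> fs f \<and> (\<forall>u. f u \<noteq> 0 \<longrightarrow> P u)"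

lemma zspan_fs: "f \<in> zspan R \<Longrightarrow> (\<And>r. r \<in> R \<Longrightarrow> fs r) \<Longrightarrow> fs f"
proof (induct rule: zspan.induct)
  case zspan_zero then show ?case using fs_zero by (simp add: zero_fun_def)
next
  case (zspan_gen r) then show ?case by simp
next
  case (zspan_diff f g) then have "fs f" "fs g" by auto
  then show ?case by (simp only: fdiff_eq fs_diff)
qed

lemma ideal_gen:
  assumes Rfs: "\<And>r. r \<in> R \<Longrightarrow> fs r"
    and H: "\<And>r v. r \<in> R \<Longrightarrow> P v \<Longrightarrow> fmult gm r (single v) \<in> zspan R \<and> fmult gm (single v) r \<in> zspan R"
    and f: "f \<in> zspan R" and g: "supp_in P g"
  shows "fmult gm f g \<in> zspan R \<and> fmult gm g f \<in> zspan R"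
proof -
  have fsf: "fs f" using zspan_fs[OF f Rfs] .
  have one: "fmult gm f (single v) \<in> zspan R \<and> fmult gm (single v) f \<in> zspan R" if "P v" for v
    using f
  proof (induct rule: zspan.induct)
    case zspan_zero then show ?case
      using zspan_0 by (simp add: zero_fun_def[symmetric] fmult_zero1 fmult_zero2)
  next
    case (zspan_gen r) then show ?case using H[OF _ that] by simp
  next
    case (zspan_diff f1 f2)
    have "fs f1" "fs f2" using zspan_diff zspan_fs Rfs by auto
    then show ?case using zspan_diff
      by (simp only: fdiff_eq fmult_diff1 fmult_diff2 fs_single zspan_minus)
  qed
  have fsg: "fs g" using g by (simp add: supp_in_def)
  have dg: "g = (\<Sum>v\<in>{v. g v \<noteq> 0}. smul (g v) (single v))" using decomp[OF fsg] by simp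
  have "fmult gm f g = (\<Sum>v\<in>{v. g v \<noteq> 0}. smul (g v) (fmult gm f (single v)))"
    by (subst dg) (simp add: fmult_sum2 fmult_smul2 fs_smul fs_single fsf)
  moreover have "fmult gm g f = (\<Sum>v\<in>{v. g v \<noteq> 0}. smul (g v) (fmult gm (single v) f))"
    by (subst dg) (simp add: fmult_sum1 fmult_smul1 fs_smul fs_single fsf)
  ultimately show ?thesis using one g
    by (auto simp: supp_in_def intro!: zspan_sum zspan_smul)
qed

lemma assoc_gen:
  assumes H: "\<And>u v w. P u \<Longrightarrow> P v \<Longrightarrow> P w \<Longrightarrow> single (gm (gm u v) w) - single (gm u (gm v w)) \<in> zspan R"
    and f: "supp_in P f" and g: "supp_in P g" and h: "supp_in P h"
  shows "fmult gm (fmult gm f g) h - fmult gm f (fmult gm g h) \<in> zspan R"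
proof -
  have fsf: "fs f" and fsg: "fs g" and fsh: "fs h" using f g h by (auto simp: supp_in_def)
  let ?F = "{u. f u \<noteq> 0}" and ?G = "{u. g u \<noteq> 0}" and ?H = "{u. h u \<noteq> 0}"
  have L: "fmult gm (fmult gm f g) h = (\<Sum>u\<in>?F. \<Sum>v\<in>?G. smul (f u) (smul (g v)
      (\<Sum>w\<in>?H. smul (h w) (single (gm (gm u v) w)))))"
    by (simp add: fmult_supp[OF fsf fsg] fmult_sum1 fmult_smul1 fs_sum fs_smul fs_single fsh fmult_single_left)
  have R: "fmult gm f (fmult gm g h) = (\<Sum>u\<in>?F. \<Sum>v\<in>?G. smul (f u) (smul (g v)
      (\<Sum>w\<in>?H. smul (h w) (single (gm u (gm v w))))))"
  proof -
    have "fmult gm f (fmult gm g h) = (\<Sum>v\<in>?G. \<Sum>w\<in>?H. smul (g v) (smul (h w)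
      (\<Sum>u\<in>?F. smul (f u) (single (gm u (gm v w))))))"
      by (simp add: fmult_supp[OF fsg fsh] fmult_sum2 fmult_smul2 fs_sum fs_smul fs_single fsf fmult_single_right)
    also have "\<dots> = (\<Sum>v\<in>?G. \<Sum>w\<in>?H. \<Sum>u\<in>?F. smul (f u) (smul (g v) (smul (h w) (single (gm u (gm v w))))))"
      by (simp add: smul_sum smul_smul mult_ac)
    also have "\<dots> = (\<Sum>u\<in>?F. \<Sum>v\<in>?G. \<Sum>w\<in>?H. smul (f u) (smul (g v) (smul (h w) (single (gm u (gm v w))))))"
      by (subst sum.swap) (subst (2) sum.swap, rule refl)
    finally show ?thesis by (simp add: smul_sum)
  qed
  show ?thesis unfolding L R
    using f g h
    by (auto simp: supp_in_def intro!: sum_diff_zspan smul_diff_zspan H)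
qed

lemma unit_left_gen:
  assumes H: "\<And>v. P v \<Longrightarrow> single (gm a v) - single v \<in> zspan R" and f: "supp_in P f"
  shows "fmult gm (single a) f - f \<in> zspan R"
proof -
  have fsf: "fs f" using f by (simp add: supp_in_def)
  have "fmult gm (single a) f - f = (\<Sum>v\<in>{v. f v \<noteq> 0}. smul (f v) (single (gm a v)))
     - (\<Sum>v\<in>{v. f v \<noteq> 0}. smul (f v) (single v))"
    by (simp add: fmult_single_left[OF fsf] decomp[OF fsf])
  then show ?thesis using f by (auto simp: supp_in_def intro!: sum_diff_zspan smul_diff_zspan H)
qed

lemma unit_right_gen:
  assumes H: "\<And>v. P v \<Longrightarrow> single (gm v a) - single v \<in> zspan R" and f: "supp_in P f"
  shows "fmult gm f (single a) - f \<in> zspan R"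
proof -
  have fsf: "fs f" using f by (simp add: supp_in_def)
  have "fmult gm f (single a) - f = (\<Sum>v\<in>{v. f v \<noteq> 0}. smul (f v) (single (gm v a)))
     - (\<Sum>v\<in>{v. f v \<noteq> 0}. smul (f v) (single v))"
    by (simp add: fmult_single_right[OF fsf] decomp[OF fsf])
  then show ?thesis using f by (auto simp: supp_in_def intro!: sum_diff_zspan smul_diff_zspan H)
qed

lemma central_gen:
  assumes H: "\<And>v. P v \<Longrightarrow> single (gm a v) - single (gm v a) \<in> zspan R" and f: "supp_in P f"
  shows "fmult gm (single a) f - fmult gm f (single a) \<in> zspan R"
proof -
  have fsf: "fs f" using f by (simp add: supp_in_def)
  have "fmult gm (single a) f - fmult gm f (single a) = (\<Sum>v\<in>{v. f v \<noteq> 0}. smul (f v) (single (gm a v)))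
     - (\<Sum>v\<in>{v. f v \<noteq> 0}. smul (f v) (single (gm v a)))"
    by (simp add: fmult_single_left[OF fsf] fmult_single_right[OF fsf])
  then show ?thesis using f by (auto simp: supp_in_def intro!: sum_diff_zspan smul_diff_zspan H)
qed


locale bsetup =
  fixes lM :: "'a::ring_1 \<Rightarrow> 'm::ab_group_add \<Rightarrow> 'm" and rM :: "'m \<Rightarrow> 'a \<Rightarrow> 'm"
    and lN :: "'a \<Rightarrow> 'n::ab_group_add \<Rightarrow> 'n" and rN :: "'n \<Rightarrow> 'a \<Rightarrow> 'n"
    and \<beta> :: "'m \<Rightarrow> 'n \<Rightarrow> 'a" and \<beta>' :: "'n \<Rightarrow> 'm \<Rightarrow> 'a"
  assumes lM_add2: "lM a (x + x') = lM a x + lM a x'"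
    and lM_add1: "lM (a + b) x = lM a x + lM b x"
    and lM_mult: "lM (a * b) x = lM a (lM b x)"
    and lM_one: "lM 1 x = x"
    and rM_add1: "rM (x + x') a = rM x a + rM x' a"
    and rM_add2: "rM x (a + b) = rM x a + rM x b"
    and rM_mult: "rM x (a * b) = rM (rM x a) b"
    and rM_one: "rM x 1 = x"
    and lrM: "lM a (rM x b) = rM (lM a x) b"
    and lN_add2: "lN a (y + y') = lN a y + lN a y'"
    and lN_add1: "lN (a + b) y = lN a y + lN b y"
    and lN_mult: "lN (a * b) y = lN a (lN b y)"
    and lN_one: "lN 1 y = y"
    and rN_add1: "rN (y + y') a = rN y a + rN y' a"
    and rN_add2: "rN y (a + b) = rN y a + rN y b"
    and rN_mult: "rN y (a * b) = rN (rN y a) b"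
    and rN_one: "rN y 1 = y"
    and lrN: "lN a (rN y b) = rN (lN a y) b"
    and betaM_add1: "\<beta> (x + x') y = \<beta> x y + \<beta> x' y"
    and betaM_add2: "\<beta> x (y + y') = \<beta> x y + \<beta> x y'"
    and betaM_bal: "\<beta> (rM x a) y = \<beta> x (lN a y)"
    and betaM_l: "\<beta> (lM a x) y = a * \<beta> x y"
    and betaM_r: "\<beta> x (rN y a) = \<beta> x y * a"
    and betaN_add1: "\<beta>' (y + y') x = \<beta>' y x + \<beta>' y' x"
    and betaN_add2: "\<beta>' y (x + x') = \<beta>' y x + \<beta>' y x'"
    and betaN_bal: "\<beta>' (rN y a) x = \<beta>' y (lM a x)"
    and betaN_l: "\<beta>' (lN a y) x = a * \<beta>' y x"
    and betaN_r: "\<beta>' y (rM x a) = \<beta>' y x * a"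
    and bondM: "lM (\<beta> x y) x' = rM x (\<beta>' y x')"
    and bondN: "lN (\<beta>' y x) y' = rN y (\<beta> x y')"
begin

abbreviation "cP \<equiv> cwP rM lN \<beta>"
abbreviation "cN \<equiv> cwN rN lM \<beta>'"
abbreviation "gm \<equiv> gmult lM rM lN rN \<beta> \<beta>'"
abbreviation "Z \<equiv> zspan (tensor_rels lM rM lN rN)"

definition eqv :: "('a, 'm, 'n) gen \<Rightarrow> ('a, 'm, 'n) gen \<Rightarrow> bool" where
  "eqv u v \<longleftrightarrow> single u - single v \<in> Z"
definition add3 :: "('a, 'm, 'n) gen \<Rightarrow> ('a, 'm, 'n) gen \<Rightarrow> ('a, 'm, 'n) gen \<Rightarrow> bool" where
  "add3 u v w \<longleftrightarrow> single u - single v - single w \<in> Z"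
definition addF :: "('x::plus \<Rightarrow> ('a, 'm, 'n) gen) \<Rightarrow> bool" where
  "addF F \<longleftrightarrow> (\<forall>p q. add3 (F (p + q)) (F p) (F q))"

lemma eqv_refl: "eqv u u" by (simp add: eqv_def zspan_0)
lemma eqv_eq: "u = v \<Longrightarrow> eqv u v" by (simp add: eqv_refl)
lemma eqv_sym: "eqv u v \<Longrightarrow> eqv v u"
  unfolding eqv_def using zspan_uminus by fastforce
lemma eqv_trans: "eqv u v \<Longrightarrow> eqv v w \<Longrightarrow> eqv u w"
  unfolding eqv_def using zspan_add by fastforce

lemma addF_comp: "addF F \<Longrightarrow> (\<And>p q. h (p + q) = h p + h q) \<Longrightarrow> addF (\<lambda>p. F (h p))"
  by (simp add: addF_def)

lemma in_rel: "r \<in> tensor_rels lM rM lN rN \<Longrightarrow> r \<in> Z" by (rule zspan_gen)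

lemma rel0: "add3 (G0 (a + b)) (G0 a) (G0 b)"
  unfolding add3_def by (rule in_rel) (auto simp: tensor_rels_def fdiff_eq)
lemma relPa: "add3 (GP (xs @ (x + x') # zs)) (GP (xs @ x # zs)) (GP (xs @ x' # zs))"
  unfolding add3_def by (rule in_rel) (unfold tensor_rels_def fdiff_eq, blast)
lemma relNa: "add3 (GN (xs @ (x + x') # zs)) (GN (xs @ x # zs)) (GN (xs @ x' # zs))"
  unfolding add3_def by (rule in_rel) (unfold tensor_rels_def fdiff_eq, blast)
lemma relPb: "eqv (GP (xs @ rM x a # x' # zs)) (GP (xs @ x # lM a x' # zs))"
  unfolding eqv_def by (rule in_rel) (unfold tensor_rels_def fdiff_eq, blast)
lemma relNb: "eqv (GN (xs @ rN x a # x' # zs)) (GN (xs @ x # lN a x' # zs))"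
  unfolding eqv_def by (rule in_rel) (unfold tensor_rels_def fdiff_eq, blast)

lemma addF_G0: "addF (\<lambda>a. G0 a)" by (simp add: addF_def rel0)

end

context bsetup begin

lemma PP_add_scalar: "addF (\<lambda>a. cP rxs a ys)"
proof (induct rxs arbitrary: ys)
  case Nil show ?case
  proof (cases ys)
    case Nil then show ?thesis by (simp add: addF_G0)
  next
    case (Cons y ys') then show ?thesis
      using relNa[of "[]"] by (simp add: addF_def lN_add1)
  qed
next
  case (Cons x rxs) show ?case
  proof (cases ys)
    case Nil then show ?thesis
      using relPa[of "rev rxs" _ _ "[]"] by (simp add: addF_def rM_add2)
  next
    case (Cons y ys')
    have "addF (\<lambda>a. cP rxs (\<beta> (rM x a) y) ys')"
      by (rule addF_comp[OF Cons.hyps]) (simp add: rM_add2 betaM_add1)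
    then show ?thesis using Cons by simp
  qed
qed

lemma PP_add_left: "addF (\<lambda>x. cP (rxs1 @ x # rxs2) a ys)"
proof (induct rxs1 arbitrary: a ys)
  case Nil show ?case
  proof (cases ys)
    case Nil then show ?thesis
      using relPa[of "rev rxs2" _ _ "[]"] by (simp add: addF_def rM_add1)
  next
    case (Cons y ys')
    have "addF (\<lambda>x. cP rxs2 (\<beta> (rM x a) y) ys')"
      by (rule addF_comp[OF PP_add_scalar]) (simp add: rM_add1 betaM_add1)
    then show ?thesis using Cons by simp
  qed
next
  case (Cons z rxs1) show ?case
  proof (cases ys)
    case Nil then show ?thesis
      using relPa[of "rev rxs2" _ _ "rev rxs1 @ [rM z a]"] by (simp add: addF_def)
  next
    case (Cons y ys') then show ?thesis using Cons.hyps by simp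
  qed
qed

lemma PP_add_right: "addF (\<lambda>y. cP rxs a (ys1 @ y # ys2))"
proof (induct rxs arbitrary: a ys1)
  case Nil show ?case
  proof (cases ys1)
    case Nil then show ?thesis
      using relNa[of "[]"] by (simp add: addF_def lN_add2)
  next
    case (Cons y0 ys1') then show ?thesis
      using relNa[of "lN a y0 # ys1'"] by (simp add: addF_def)
  qed
next
  case (Cons x rxs) show ?case
  proof (cases ys1)
    case Nil
    have "addF (\<lambda>y. cP rxs (\<beta> (rM x a) y) ys2)"
      by (rule addF_comp[OF PP_add_scalar]) (simp add: betaM_add2)
    then show ?thesis using Nil by simp
  next
    case (Cons y0 ys1') then show ?thesis using Cons.hyps by simp
  qed
qed

lemma PP_4a: "cP (rM x a # rxs) d ys = cP (x # rxs) (a * d) ys"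
  by (cases ys) (simp_all add: rM_mult)

lemma PP_bal_left: "eqv (cP (rxs1 @ x' # rM x a # rxs2) c ys) (cP (rxs1 @ lM a x' # x # rxs2) c ys)"
proof (induct rxs1 arbitrary: c ys)
  case Nil show ?case
  proof (cases ys)
    case Nil then show ?thesis
      using relPb[of "rev rxs2" x a "rM x' c" "[]"] by (simp add: lrM)
  next
    case (Cons y ys') then show ?thesis
      by (simp add: PP_4a betaM_bal betaM_l eqv_refl)
  qed
next
  case (Cons z rxs1) show ?case
  proof (cases ys)
    case Nil then show ?thesis
      using relPb[of "rev rxs2" x a x' "rev rxs1 @ [rM z c]"] by simp
  next
    case (Cons y ys') then show ?thesis using Cons.hyps by simp
  qed
qed

lemma PP_5a: "cP rxs (d * a) (y # ys) = cP rxs d (lN a y # ys)"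
  by (cases rxs) (simp_all add: lN_mult rM_mult betaM_bal)

lemma PP_bal_right: "eqv (cP rxs c (ys1 @ rN y a # y' # ys2)) (cP rxs c (ys1 @ y # lN a y' # ys2))"
proof (induct rxs arbitrary: c ys1)
  case Nil show ?case
  proof (cases ys1)
    case Nil then show ?thesis
      using relNb[of "[]" "lN c y" a y' ys2] by (simp add: lrN)
  next
    case (Cons y0 ys1') then show ?thesis
      using relNb[of "lN c y0 # ys1'"] by simp
  qed
next
  case (Cons x rxs) show ?case
  proof (cases ys1)
    case Nil then show ?thesis
      by (simp add: betaM_r PP_5a eqv_refl)
  next
    case (Cons y0 ys1') then show ?thesis using Cons.hyps by simp
  qed
qed

lemma PP_E1: "ys' \<noteq> [] \<Longrightarrow> gm (cP rxs a ys) (GN ys') = cP rxs a (ys @ ys')"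
proof (induct rxs arbitrary: a ys)
  case Nil then show ?case by (cases ys') (cases ys, simp_all)+
next
  case (Cons x rxs) then show ?case
    by (cases ys) (simp_all add: PP_4a)
qed

lemma PP_E2: "xs \<noteq> [] \<Longrightarrow> gm (GP xs) (cP rxs a ys) = cP (rxs @ rev xs) a ys"
proof (induct rxs arbitrary: a ys)
  case Nil then show ?case
    by (cases ys) (simp_all add: PP_5a[of _ 1, simplified, symmetric])
next
  case (Cons x rxs) then show ?case
    by (cases ys) simp_all
qed

lemma PP_E3: "gm (G0 b) (cP [] a ys) = cP [] (b * a) ys"
  by (cases ys) (simp_all add: lN_mult)

lemma PP_E4: "gm (G0 b) (cP (rxs @ [x]) a ys) = cP (rxs @ [lM b x]) a ys"
proof (induct rxs arbitrary: a ys)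
  case Nil then show ?case
    by (cases ys) (simp_all add: lrM PP_E3 betaM_bal betaM_l)
next
  case (Cons z rxs) then show ?case
    by (cases ys) simp_all
qed

lemma PP_E5: "gm (cP rxs a []) (G0 b) = cP rxs (a * b) []"
  by (cases rxs) (simp_all add: rM_mult)

lemma PP_E6: "gm (cP rxs a (ys @ [y])) (G0 b) = cP rxs a (ys @ [rN y b])"
proof (induct rxs arbitrary: a ys)
  case Nil then show ?case
    by (cases ys) (simp_all add: lrN)
next
  case (Cons x rxs) then show ?case
    by (cases ys) (simp_all add: PP_E5 betaM_r)
qed

lemma PP_valid: "valid_gen (cP rxs a ys) \<and> gdeg (cP rxs a ys) = int (length rxs) - int (length ys)"
proof (induct rxs arbitrary: a ys)
  case Nil then show ?case by (cases ys) simp_all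
next
  case (Cons x rxs) show ?case
  proof (cases ys)
    case Nil then show ?thesis by simp
  next
    case (Cons y ys')
    have "valid_gen (cP rxs (\<beta> (rM x a) y) ys') \<and>
      gdeg (cP rxs (\<beta> (rM x a) y) ys') = int (length rxs) - int (length ys')"
      by (rule Cons.hyps)
    then show ?thesis using Cons by (simp del: cwP.simps add: cwP.simps(4))
  qed
qed
lemma NN_add_scalar: "addF (\<lambda>a. cN rxs a ys)"
proof (induct rxs arbitrary: ys)
  case Nil show ?case
  proof (cases ys)
    case Nil then show ?thesis by (simp add: addF_G0)
  next
    case (Cons y ys') then show ?thesis
      using relPa[of "[]"] by (simp add: addF_def lM_add1)
  qed
next
  case (Cons x rxs) show ?case
  proof (cases ys)
    case Nil then show ?thesis
      using relNa[of "rev rxs" _ _ "[]"] by (simp add: addF_def rN_add2)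
  next
    case (Cons y ys')
    have "addF (\<lambda>a. cN rxs (\<beta>' (rN x a) y) ys')"
      by (rule addF_comp[OF Cons.hyps]) (simp add: rN_add2 betaN_add1)
    then show ?thesis using Cons by simp
  qed
qed

lemma NN_add_left: "addF (\<lambda>x. cN (rxs1 @ x # rxs2) a ys)"
proof (induct rxs1 arbitrary: a ys)
  case Nil show ?case
  proof (cases ys)
    case Nil then show ?thesis
      using relNa[of "rev rxs2" _ _ "[]"] by (simp add: addF_def rN_add1)
  next
    case (Cons y ys')
    have "addF (\<lambda>x. cN rxs2 (\<beta>' (rN x a) y) ys')"
      by (rule addF_comp[OF NN_add_scalar]) (simp add: rN_add1 betaN_add1)
    then show ?thesis using Cons by simp
  qed
next
  case (Cons z rxs1) show ?case
  proof (cases ys)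
    case Nil then show ?thesis
      using relNa[of "rev rxs2" _ _ "rev rxs1 @ [rN z a]"] by (simp add: addF_def)
  next
    case (Cons y ys') then show ?thesis using Cons.hyps by simp
  qed
qed

lemma NN_add_right: "addF (\<lambda>y. cN rxs a (ys1 @ y # ys2))"
proof (induct rxs arbitrary: a ys1)
  case Nil show ?case
  proof (cases ys1)
    case Nil then show ?thesis
      using relPa[of "[]"] by (simp add: addF_def lM_add2)
  next
    case (Cons y0 ys1') then show ?thesis
      using relPa[of "lM a y0 # ys1'"] by (simp add: addF_def)
  qed
next
  case (Cons x rxs) show ?case
  proof (cases ys1)
    case Nil
    have "addF (\<lambda>y. cN rxs (\<beta>' (rN x a) y) ys2)"
      by (rule addF_comp[OF NN_add_scalar]) (simp add: betaN_add2)
    then show ?thesis using Nil by simp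
  next
    case (Cons y0 ys1') then show ?thesis using Cons.hyps by simp
  qed
qed

lemma NN_4a: "cN (rN x a # rxs) d ys = cN (x # rxs) (a * d) ys"
  by (cases ys) (simp_all add: rN_mult)

lemma NN_bal_left: "eqv (cN (rxs1 @ x' # rN x a # rxs2) c ys) (cN (rxs1 @ lN a x' # x # rxs2) c ys)"
proof (induct rxs1 arbitrary: c ys)
  case Nil show ?case
  proof (cases ys)
    case Nil then show ?thesis
      using relNb[of "rev rxs2" x a "rN x' c" "[]"] by (simp add: lrN)
  next
    case (Cons y ys') then show ?thesis
      by (simp add: NN_4a betaN_bal betaN_l eqv_refl)
  qed
next
  case (Cons z rxs1) show ?case
  proof (cases ys)
    case Nil then show ?thesis
      using relNb[of "rev rxs2" x a x' "rev rxs1 @ [rN z c]"] by simp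
  next
    case (Cons y ys') then show ?thesis using Cons.hyps by simp
  qed
qed

lemma NN_5a: "cN rxs (d * a) (y # ys) = cN rxs d (lM a y # ys)"
  by (cases rxs) (simp_all add: lM_mult rN_mult betaN_bal)

lemma NN_bal_right: "eqv (cN rxs c (ys1 @ rM y a # y' # ys2)) (cN rxs c (ys1 @ y # lM a y' # ys2))"
proof (induct rxs arbitrary: c ys1)
  case Nil show ?case
  proof (cases ys1)
    case Nil then show ?thesis
      using relPb[of "[]" "lM c y" a y' ys2] by (simp add: lrM)
  next
    case (Cons y0 ys1') then show ?thesis
      using relPb[of "lM c y0 # ys1'"] by simp
  qed
next
  case (Cons x rxs) show ?case
  proof (cases ys1)
    case Nil then show ?thesis
      by (simp add: betaN_r NN_5a eqv_refl)
  next
    case (Cons y0 ys1') then show ?thesis using Cons.hyps by simp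
  qed
qed

lemma NN_E1: "ys' \<noteq> [] \<Longrightarrow> gm (cN rxs a ys) (GP ys') = cN rxs a (ys @ ys')"
proof (induct rxs arbitrary: a ys)
  case Nil then show ?case by (cases ys') (cases ys, simp_all)+
next
  case (Cons x rxs) then show ?case
    by (cases ys) (simp_all add: NN_4a)
qed

lemma NN_E2: "xs \<noteq> [] \<Longrightarrow> gm (GN xs) (cN rxs a ys) = cN (rxs @ rev xs) a ys"
proof (induct rxs arbitrary: a ys)
  case Nil then show ?case
    by (cases ys) (simp_all add: NN_5a[of _ 1, simplified, symmetric])
next
  case (Cons x rxs) then show ?case
    by (cases ys) simp_all
qed

lemma NN_E3: "gm (G0 b) (cN [] a ys) = cN [] (b * a) ys"
  by (cases ys) (simp_all add: lM_mult)

lemma NN_E4: "gm (G0 b) (cN (rxs @ [x]) a ys) = cN (rxs @ [lN b x]) a ys"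
proof (induct rxs arbitrary: a ys)
  case Nil then show ?case
    by (cases ys) (simp_all add: lrN NN_E3 betaN_bal betaN_l)
next
  case (Cons z rxs) then show ?case
    by (cases ys) simp_all
qed

lemma NN_E5: "gm (cN rxs a []) (G0 b) = cN rxs (a * b) []"
  by (cases rxs) (simp_all add: rN_mult)

lemma NN_E6: "gm (cN rxs a (ys @ [y])) (G0 b) = cN rxs a (ys @ [rM y b])"
proof (induct rxs arbitrary: a ys)
  case Nil then show ?case
    by (cases ys) (simp_all add: lrM)
next
  case (Cons x rxs) then show ?case
    by (cases ys) (simp_all add: NN_E5 betaN_r)
qed

lemma NN_valid: "valid_gen (cN rxs a ys) \<and> gdeg (cN rxs a ys) = int (length ys) - int (length rxs)"
proof (induct rxs arbitrary: a ys)
  case Nil then show ?case by (cases ys) simp_all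
next
  case (Cons x rxs) show ?case
  proof (cases ys)
    case Nil then show ?thesis by simp
  next
    case (Cons y ys')
    have "valid_gen (cN rxs (\<beta>' (rN x a) y) ys') \<and>
      gdeg (cN rxs (\<beta>' (rN x a) y) ys') = int (length ys') - int (length rxs)"
      by (rule Cons.hyps)
    then show ?thesis using Cons by (simp del: cwN.simps add: cwN.simps(4))
  qed
qed

end

context bsetup begin

lemma addF_G0_mult: "addF (\<lambda>a. G0 (a * d))"
  by (rule addF_comp[OF addF_G0]) (simp add: distrib_right)
lemma addF_G0_mult': "addF (\<lambda>a. G0 (d * a))"
  by (rule addF_comp[OF addF_G0]) (simp add: distrib_left)

lemma G0_addL: "addF (\<lambda>a. gm (G0 a) v)"
  by (cases v) (simp_all add: addF_G0_mult PP_add_scalar NN_add_scalar)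
lemma G0_addR: "addF (\<lambda>a. gm v (G0 a))"
  by (cases v) (simp_all add: addF_G0_mult' PP_add_scalar NN_add_scalar)

lemma PP_rev: "xs \<noteq> [] \<Longrightarrow> cP (rev xs) a [] = GP (butlast xs @ [rM (last xs) a])"
  by (induct xs rule: rev_induct) auto

lemma PP_slot_addR: "addF (\<lambda>x. gm (GP (xs @ x # zs)) v)"
proof (cases v)
  case (G0 d) then show ?thesis using PP_add_left[of "rev zs" "rev xs" d "[]"] by simp
next
  case (GP ws) then show ?thesis using relPa[of xs _ _ "zs @ ws"] by (simp add: addF_def)
next
  case (GN ys) then show ?thesis using PP_add_left[of "rev zs" "rev xs" 1 ys] by simp
qed

lemma PP_slot_addL: "addF (\<lambda>x. gm v (GP (xs @ x # zs)))"
proof (cases v)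
  case (G0 d) then show ?thesis using NN_add_right[of "[]" d xs zs] by simp
next
  case (GP ws) then show ?thesis using relPa[of "ws @ xs" _ _ zs] by (simp add: addF_def)
next
  case (GN ys) then show ?thesis using NN_add_right[of "rev ys" 1 xs zs] by simp
qed

lemma PP_slot_balR: "eqv (gm (GP (xs @ rM x a # x' # zs)) v) (gm (GP (xs @ x # lM a x' # zs)) v)"
proof (cases v)
  case (G0 d) then show ?thesis using PP_bal_left[of "rev zs" x' x a "rev xs" d "[]"] by simp
next
  case (GP ws) then show ?thesis using relPb[of xs x a x' "zs @ ws"] by simp
next
  case (GN ys) then show ?thesis using PP_bal_left[of "rev zs" x' x a "rev xs" 1 ys] by simp
qed

lemma PP_slot_balL: "eqv (gm v (GP (xs @ rM x a # x' # zs))) (gm v (GP (xs @ x # lM a x' # zs)))"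
proof (cases v)
  case (G0 d) then show ?thesis using NN_bal_right[of "[]" d xs x a x' zs] by simp
next
  case (GP ws) then show ?thesis using relPb[of "ws @ xs" x a x' zs] by simp
next
  case (GN ys) then show ?thesis using NN_bal_right[of "rev ys" 1 xs x a x' zs] by simp
qed

lemma PP_central_aux:
  assumes "\<And>z. lM p z = rM z p"
  shows "eqv (GP (pre @ lM p x # xs)) (GP (pre @ butlast (x # xs) @ [rM (last (x # xs)) p]))"
proof (induct xs arbitrary: pre x)
  case Nil then show ?case by (simp add: assms eqv_refl)
next
  case (Cons x2 xs)
  have "eqv (GP (pre @ lM p x # x2 # xs)) (GP (pre @ x # lM p x2 # xs))"
    using relPb[of pre x p x2 xs] by (simp add: assms)
  moreover have "eqv (GP ((pre @ [x]) @ lM p x2 # xs)) (GP ((pre @ [x]) @ butlast (x2 # xs) @ [rM (last (x2 # xs)) p]))"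
    by (rule Cons.hyps)
  ultimately show ?case by (auto intro: eqv_trans)
qed
lemma NN_rev: "xs \<noteq> [] \<Longrightarrow> cN (rev xs) a [] = GN (butlast xs @ [rN (last xs) a])"
  by (induct xs rule: rev_induct) auto

lemma NN_slot_addR: "addF (\<lambda>x. gm (GN (xs @ x # zs)) v)"
proof (cases v)
  case (G0 d) then show ?thesis using NN_add_left[of "rev zs" "rev xs" d "[]"] by simp
next
  case (GN ws) then show ?thesis using relNa[of xs _ _ "zs @ ws"] by (simp add: addF_def)
next
  case (GP ys) then show ?thesis using NN_add_left[of "rev zs" "rev xs" 1 ys] by simp
qed

lemma NN_slot_addL: "addF (\<lambda>x. gm v (GN (xs @ x # zs)))"
proof (cases v)
  case (G0 d) then show ?thesis using PP_add_right[of "[]" d xs zs] by simp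
next
  case (GN ws) then show ?thesis using relNa[of "ws @ xs" _ _ zs] by (simp add: addF_def)
next
  case (GP ys) then show ?thesis using PP_add_right[of "rev ys" 1 xs zs] by simp
qed

lemma NN_slot_balR: "eqv (gm (GN (xs @ rN x a # x' # zs)) v) (gm (GN (xs @ x # lN a x' # zs)) v)"
proof (cases v)
  case (G0 d) then show ?thesis using NN_bal_left[of "rev zs" x' x a "rev xs" d "[]"] by simp
next
  case (GN ws) then show ?thesis using relNb[of xs x a x' "zs @ ws"] by simp
next
  case (GP ys) then show ?thesis using NN_bal_left[of "rev zs" x' x a "rev xs" 1 ys] by simp
qed

lemma NN_slot_balL: "eqv (gm v (GN (xs @ rN x a # x' # zs))) (gm v (GN (xs @ x # lN a x' # zs)))"
proof (cases v)
  case (G0 d) then show ?thesis using PP_bal_right[of "[]" d xs x a x' zs] by simp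
next
  case (GN ws) then show ?thesis using relNb[of "ws @ xs" x a x' zs] by simp
next
  case (GP ys) then show ?thesis using PP_bal_right[of "rev ys" 1 xs x a x' zs] by simp
qed

lemma NN_central_aux:
  assumes "\<And>z. lN p z = rN z p"
  shows "eqv (GN (pre @ lN p x # xs)) (GN (pre @ butlast (x # xs) @ [rN (last (x # xs)) p]))"
proof (induct xs arbitrary: pre x)
  case Nil then show ?case by (simp add: assms eqv_refl)
next
  case (Cons x2 xs)
  have "eqv (GN (pre @ lN p x # x2 # xs)) (GN (pre @ x # lN p x2 # xs))"
    using relNb[of pre x p x2 xs] by (simp add: assms)
  moreover have "eqv (GN ((pre @ [x]) @ lN p x2 # xs)) (GN ((pre @ [x]) @ butlast (x2 # xs) @ [rN (last (x2 # xs)) p]))"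
    by (rule Cons.hyps)
  ultimately show ?case by (auto intro: eqv_trans)
qed

end


lemma fm3R: "fmult gm (single a - single b - single c) (single v) = single (gm a v) - single (gm b v) - single (gm c v)"
  by (simp add: fmult_diff1 fs_diff fs_single fmult_single)
lemma fm3L: "fmult gm (single v) (single a - single b - single c) = single (gm v a) - single (gm v b) - single (gm v c)"
  by (simp add: fmult_diff2 fs_diff fs_single fmult_single)
lemma fm2R: "fmult gm (single a - single b) (single v) = single (gm a v) - single (gm b v)"
  by (simp add: fmult_diff1 fs_diff fs_single fmult_single)
lemma fm2L: "fmult gm (single v) (single a - single b) = single (gm v a) - single (gm v b)"
  by (simp add: fmult_diff2 fs_diff fs_single fmult_single)

context bsetup begin

lemma addF_Z: "addF F \<Longrightarrow> single (F (p + q)) - single (F p) - single (F q) \<in> Z"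
  by (simp add: addF_def add3_def)

lemma rel_cases:
  assumes "r \<in> tensor_rels lM rM lN rN"
  obtains (c0) a b where "r = single (G0 (a + b)) - single (G0 a) - single (G0 b)"
  | (cPa) xs x x' zs where "r = single (GP (xs @ (x + x') # zs)) - single (GP (xs @ x # zs)) - single (GP (xs @ x' # zs))"
  | (cPb) xs x a x' zs where "r = single (GP (xs @ rM x a # x' # zs)) - single (GP (xs @ x # lM a x' # zs))"
  | (cNa) xs x x' zs where "r = single (GN (xs @ (x + x') # zs)) - single (GN (xs @ x # zs)) - single (GN (xs @ x' # zs))"
  | (cNb) xs x a x' zs where "r = single (GN (xs @ rN x a # x' # zs)) - single (GN (xs @ x # lN a x' # zs))"
  using assms unfolding tensor_rels_def fdiff_eq by blast

lemma ideal_H: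
  assumes "r \<in> tensor_rels lM rM lN rN"
  shows "fmult gm r (single v) \<in> Z \<and> fmult gm (single v) r \<in> Z"
  using assms
proof (cases rule: rel_cases)
  case c0 then show ?thesis by (simp add: fm3R fm3L addF_Z[OF G0_addL] addF_Z[OF G0_addR])
next
  case cPa then show ?thesis by (simp add: fm3R fm3L addF_Z[OF PP_slot_addR] addF_Z[OF PP_slot_addL])
next
  case cPb then show ?thesis by (simp add: fm2R fm2L PP_slot_balR[unfolded eqv_def] PP_slot_balL[unfolded eqv_def])
next
  case cNa then show ?thesis by (simp add: fm3R fm3L addF_Z[OF NN_slot_addR] addF_Z[OF NN_slot_addL])
next
  case cNb then show ?thesis by (simp add: fm2R fm2L NN_slot_balR[unfolded eqv_def] NN_slot_balL[unfolded eqv_def])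
qed

lemma rels_fs: "r \<in> tensor_rels lM rM lN rN \<Longrightarrow> fs r"
  unfolding tensor_rels_def fdiff_eq by (auto intro!: fs_diff fs_single)

lemma gm_valid:
  "valid_gen u \<Longrightarrow> valid_gen v \<Longrightarrow> valid_gen (gm u v) \<and> gdeg (gm u v) = gdeg u + gdeg v"
  by (cases u; cases v) (auto simp: PP_valid NN_valid)

lemma unitL: "valid_gen v \<Longrightarrow> gm (G0 1) v = v"
  by (cases v) (auto simp: neq_Nil_conv lM_one lN_one)

lemma unitR: "valid_gen v \<Longrightarrow> gm v (G0 1) = v"
  by (cases v) (auto simp: PP_rev NN_rev rM_one rN_one)

lemma central:
  assumes "\<And>z. lM p z = rM z p" "\<And>z. lN p z = rN z p" "\<And>a. p * a = a * p"
    and "valid_gen v"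
  shows "eqv (gm (G0 p) v) (gm v (G0 p))"
proof (cases v)
  case (G0 a) then show ?thesis by (simp add: assms eqv_refl)
next
  case (GP xs)
  then obtain x xs' where xs: "xs = x # xs'" using assms(4) by (cases xs) auto
  show ?thesis using GP xs PP_central_aux[of p "[]" x xs', OF assms(1)] PP_rev[of "x # xs'" p] by simp
next
  case (GN ys)
  then obtain y ys' where ys: "ys = y # ys'" using assms(4) by (cases ys) auto
  show ?thesis using GN ys NN_central_aux[of p "[]" y ys', OF assms(2)] NN_rev[of "y # ys'" p] by simp
qed

end

context bsetup begin

lemma eqv_cong: "eqv u u' \<Longrightarrow> eqv (gm u w) (gm u' w) \<and> eqv (gm w u) (gm w u')"
  using ideal_gen[of "tensor_rels lM rM lN rN" "\<lambda>_. True" gm "single u - single u'" "single w"]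
    rels_fs ideal_H fm2R[of gm u u' w] fm2L[of gm w u u']
  by (auto simp: eqv_def supp_in_def fs_single)

lemma bl_id: "butlast (y # ys) @ [last (y # ys)] = y # ys"
  by (rule append_butlast_last_id) simp
lemma rev_cons': "rev (y # ys) = rev ys @ [y]" by simp

lemma PP_E6': "gm (cP rxs a (y # ys)) (G0 c) = cP rxs a (butlast (y # ys) @ [rN (last (y # ys)) c])"
  using PP_E6[of rxs a "butlast (y # ys)" "last (y # ys)" c] unfolding bl_id .
lemma NN_E6': "gm (cN rxs a (y # ys)) (G0 c) = cN rxs a (butlast (y # ys) @ [rM (last (y # ys)) c])"
  using NN_E6[of rxs a "butlast (y # ys)" "last (y # ys)" c] unfolding bl_id .
lemma PP_rev': "cP (rev ys @ [y]) c [] = GP (butlast (y # ys) @ [rM (last (y # ys)) c])"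
  using PP_rev[of "y # ys" c] unfolding rev_cons' by simp
lemma NN_rev': "cN (rev ys @ [y]) c [] = GN (butlast (y # ys) @ [rN (last (y # ys)) c])"
  using NN_rev[of "y # ys" c] unfolding rev_cons' by simp

fun hard :: "('a, 'm, 'n) gen \<Rightarrow> ('a, 'm, 'n) gen \<Rightarrow> ('a, 'm, 'n) gen \<Rightarrow> bool" where
  "hard (GP _) (G0 _) (GP _) = True"
| "hard (GN _) (G0 _) (GN _) = True"
| "hard (GP _) (GN _) (GP _) = True"
| "hard (GN _) (GP _) (GN _) = True"
| "hard _ _ _ = False"

lemma assoc_easy:
  assumes "valid_gen u" "valid_gen v" "valid_gen w" "\<not> hard u v w"
  shows "gm (gm u v) w = gm u (gm v w)"
  using assms
  apply (cases u; cases v; cases w)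
  apply (auto simp: neq_Nil_conv mult.assoc PP_E1 PP_E2 PP_E3 PP_E4 PP_E5 PP_E6 NN_E1 NN_E2 NN_E3 NN_E4 NN_E5 NN_E6)
  apply (simp_all only: PP_E6' NN_E6' PP_rev' NN_rev')
  apply (simp_all del: butlast.simps last.simps)
  done

end

context bsetup begin

lemma valid_GP: "valid_gen (GP xs) \<longleftrightarrow> xs \<noteq> []" by simp

lemma PP_hard0:
  assumes "xs \<noteq> []" "xs' \<noteq> []"
  shows "eqv (gm (gm (GP xs) (G0 a)) (GP xs')) (gm (GP xs) (gm (G0 a) (GP xs')))"
proof -
  obtain xs0 x where xs: "xs = xs0 @ [x]" using assms(1) by (cases xs rule: rev_exhaust) auto
  obtain x' xs'' where xs': "xs' = x' # xs''" using assms(2) by (cases xs') auto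
  show ?thesis using relPb[of xs0 x a x' xs''] xs xs' by simp
qed

lemma PP_type1:
  assumes "xs \<noteq> []"
  shows "(\<exists>zs. gm (GP xs) (GN [y]) = GP zs \<and> zs \<noteq> []) \<or> (\<exists>c. gm (GP xs) (GN [y]) = G0 c)"
proof -
  obtain xs0 x where xs: "xs = xs0 @ [x]" using assms(1) by (cases xs rule: rev_exhaust) auto
  show ?thesis
  proof (cases xs0 rule: rev_exhaust)
    case Nil then show ?thesis using xs by simp
  next
    case (snoc xs1 z) then show ?thesis using xs by simp
  qed
qed

lemma PP_core0:
  assumes "xs \<noteq> []"
  shows "eqv (gm (gm (GP xs) (GN [y])) (GP [x'])) (gm (GP xs) (gm (GN [y]) (GP [x'])))"
proof -
  obtain xs0 x where xs: "xs = xs0 @ [x]" using assms(1) by (cases xs rule: rev_exhaust) auto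
  show ?thesis
  proof (cases xs0 rule: rev_exhaust)
    case Nil then show ?thesis using xs by (simp add: rM_one rN_one bondM eqv_refl)
  next
    case (snoc xs1 z)
    then show ?thesis using xs relPb[of xs1 z "\<beta> x y" x' "[]"] by (simp add: rM_one rN_one bondM)
  qed
qed

lemma PP_core1:
  assumes "xs \<noteq> []" "xs' \<noteq> []"
  shows "eqv (gm (gm (GP xs) (GN [y])) (GP xs')) (gm (GP xs) (gm (GN [y]) (GP xs')))"
  using assms(2)
proof (induct xs' rule: list_nonempty_induct)
  case (single x') then show ?case using PP_core0[OF assms(1)] by simp
next
  case (cons x' xs'')
  define t where "t = gm (GP xs) (GN [y])"
  define d where "d = gm (GN [y]) (GP [x'])"
  have vt: "valid_gen t" unfolding t_def using gm_valid[of "GP xs" "GN [y]"] assms(1) by simp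
  have vd: "valid_gen d" unfolding d_def using gm_valid[of "GN [y]" "GP [x']"] by simp
  have tP: "\<not> (\<exists>zs. t = GN zs)" using PP_type1[OF assms(1), of y] unfolding t_def by auto
  have dP: "\<exists>c. d = G0 c" unfolding d_def by simp
  have "gm t (GP (x' # xs'')) = gm t (gm (GP [x']) (GP xs''))" by simp
  also have "\<dots> = gm (gm t (GP [x'])) (GP xs'')"
    using assoc_easy[of t "GP [x']" "GP xs''"] vt cons.hyps tP by (cases t) auto
  finally have e1: "gm t (GP (x' # xs'')) = gm (gm t (GP [x'])) (GP xs'')" .
  have e2: "eqv (gm (gm t (GP [x'])) (GP xs'')) (gm (gm (GP xs) d) (GP xs''))"
    using eqv_cong[OF PP_core0[OF assms(1), of y x']] unfolding t_def d_def by blast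
  have e3: "eqv (gm (gm (GP xs) d) (GP xs'')) (gm (GP xs) (gm d (GP xs'')))"
    using dP PP_hard0[OF assms(1), of xs''] cons.hyps by auto
  have "gm d (GP xs'') = gm (GN [y]) (gm (GP [x']) (GP xs''))"
    unfolding d_def using assoc_easy[of "GN [y]" "GP [x']" "GP xs''"] cons.hyps by simp
  then have e4: "gm d (GP xs'') = gm (GN [y]) (GP (x' # xs''))" by simp
  show ?case using e1 e2 e3 e4 unfolding t_def[symmetric] by (metis eqv_trans)
qed

lemma PP_PNP:
  assumes "ys \<noteq> []"
  shows "\<And>xs. xs \<noteq> [] \<Longrightarrow> xs' \<noteq> [] \<Longrightarrow> eqv (gm (gm (GP xs) (GN ys)) (GP xs')) (gm (GP xs) (gm (GN ys) (GP xs')))"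
  using assms
proof (induct ys rule: list_nonempty_induct)
  case (single y) then show ?case using PP_core1 by blast
next
  case (cons y ys')
  define t where "t = gm (GP xs) (GN [y])"
  define s where "s = gm (GN ys') (GP xs')"
  have vt: "valid_gen t" unfolding t_def using gm_valid[of "GP xs" "GN [y]"] cons.prems by simp
  have vs: "valid_gen s" unfolding s_def using gm_valid[of "GN ys'" "GP xs'"] cons.prems cons.hyps by simp
  have tP: "\<not> (\<exists>zs. t = GN zs)" using PP_type1[OF cons.prems(1), of y] unfolding t_def by auto
  have e1: "gm (GP xs) (GN (y # ys')) = gm t (GN ys')"
    unfolding t_def using assoc_easy[of "GP xs" "GN [y]" "GN ys'"] cons by simp
  have e2: "eqv (gm (gm t (GN ys')) (GP xs')) (gm t s)"
  proof (cases t)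
    case (G0 c) then show ?thesis unfolding s_def
      using assoc_easy[of t "GN ys'" "GP xs'"] cons by (simp add: eqv_refl)
  next
    case (GP zs) then show ?thesis unfolding s_def using cons vt by simp
  next
    case (GN zs) then show ?thesis using tP by auto
  qed
  have e3: "eqv (gm t s) (gm (GP xs) (gm (GN [y]) s))"
  proof (cases s)
    case (GP zs) then show ?thesis unfolding t_def using PP_core1 cons.prems vs by simp
  next
    case (G0 c) then show ?thesis unfolding t_def
      using assoc_easy[of "GP xs" "GN [y]" s] cons.prems by (simp add: eqv_refl)
  next
    case (GN zs) then show ?thesis unfolding t_def
      using assoc_easy[of "GP xs" "GN [y]" s] cons.prems vs by (simp add: eqv_refl)
  qed
  have e4: "gm (GN [y]) s = gm (GN (y # ys')) (GP xs')"
    unfolding s_def using assoc_easy[of "GN [y]" "GN ys'" "GP xs'"] cons by simp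
  show ?case using e1 e2 e3 e4 by (metis eqv_trans)
qed
lemma NN_hard0:
  assumes "xs \<noteq> []" "xs' \<noteq> []"
  shows "eqv (gm (gm (GN xs) (G0 a)) (GN xs')) (gm (GN xs) (gm (G0 a) (GN xs')))"
proof -
  obtain xs0 x where xs: "xs = xs0 @ [x]" using assms(1) by (cases xs rule: rev_exhaust) auto
  obtain x' xs'' where xs': "xs' = x' # xs''" using assms(2) by (cases xs') auto
  show ?thesis using relNb[of xs0 x a x' xs''] xs xs' by simp
qed

lemma NN_type1:
  assumes "xs \<noteq> []"
  shows "(\<exists>zs. gm (GN xs) (GP [y]) = GN zs \<and> zs \<noteq> []) \<or> (\<exists>c. gm (GN xs) (GP [y]) = G0 c)"
proof -
  obtain xs0 x where xs: "xs = xs0 @ [x]" using assms(1) by (cases xs rule: rev_exhaust) auto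
  show ?thesis
  proof (cases xs0 rule: rev_exhaust)
    case Nil then show ?thesis using xs by simp
  next
    case (snoc xs1 z) then show ?thesis using xs by simp
  qed
qed

lemma NN_core0:
  assumes "xs \<noteq> []"
  shows "eqv (gm (gm (GN xs) (GP [y])) (GN [x'])) (gm (GN xs) (gm (GP [y]) (GN [x'])))"
proof -
  obtain xs0 x where xs: "xs = xs0 @ [x]" using assms(1) by (cases xs rule: rev_exhaust) auto
  show ?thesis
  proof (cases xs0 rule: rev_exhaust)
    case Nil then show ?thesis using xs by (simp add: rN_one rM_one bondN eqv_refl)
  next
    case (snoc xs1 z)
    then show ?thesis using xs relNb[of xs1 z "\<beta>' x y" x' "[]"] by (simp add: rN_one rM_one bondN)
  qed
qed

lemma NN_core1:
  assumes "xs \<noteq> []" "xs' \<noteq> []"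
  shows "eqv (gm (gm (GN xs) (GP [y])) (GN xs')) (gm (GN xs) (gm (GP [y]) (GN xs')))"
  using assms(2)
proof (induct xs' rule: list_nonempty_induct)
  case (single x') then show ?case using NN_core0[OF assms(1)] by simp
next
  case (cons x' xs'')
  define t where "t = gm (GN xs) (GP [y])"
  define d where "d = gm (GP [y]) (GN [x'])"
  have vt: "valid_gen t" unfolding t_def using gm_valid[of "GN xs" "GP [y]"] assms(1) by simp
  have vd: "valid_gen d" unfolding d_def using gm_valid[of "GP [y]" "GN [x']"] by simp
  have tP: "\<not> (\<exists>zs. t = GP zs)" using NN_type1[OF assms(1), of y] unfolding t_def by auto
  have dP: "\<exists>c. d = G0 c" unfolding d_def by simp
  have "gm t (GN (x' # xs'')) = gm t (gm (GN [x']) (GN xs''))" by simp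
  also have "\<dots> = gm (gm t (GN [x'])) (GN xs'')"
    using assoc_easy[of t "GN [x']" "GN xs''"] vt cons.hyps tP by (cases t) auto
  finally have e1: "gm t (GN (x' # xs'')) = gm (gm t (GN [x'])) (GN xs'')" .
  have e2: "eqv (gm (gm t (GN [x'])) (GN xs'')) (gm (gm (GN xs) d) (GN xs''))"
    using eqv_cong[OF NN_core0[OF assms(1), of y x']] unfolding t_def d_def by blast
  have e3: "eqv (gm (gm (GN xs) d) (GN xs'')) (gm (GN xs) (gm d (GN xs'')))"
    using dP NN_hard0[OF assms(1), of xs''] cons.hyps by auto
  have "gm d (GN xs'') = gm (GP [y]) (gm (GN [x']) (GN xs''))"
    unfolding d_def using assoc_easy[of "GP [y]" "GN [x']" "GN xs''"] cons.hyps by simp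
  then have e4: "gm d (GN xs'') = gm (GP [y]) (GN (x' # xs''))" by simp
  show ?case using e1 e2 e3 e4 unfolding t_def[symmetric] by (metis eqv_trans)
qed

lemma NN_PNP:
  assumes "ys \<noteq> []"
  shows "\<And>xs. xs \<noteq> [] \<Longrightarrow> xs' \<noteq> [] \<Longrightarrow> eqv (gm (gm (GN xs) (GP ys)) (GN xs')) (gm (GN xs) (gm (GP ys) (GN xs')))"
  using assms
proof (induct ys rule: list_nonempty_induct)
  case (single y) then show ?case using NN_core1 by blast
next
  case (cons y ys')
  define t where "t = gm (GN xs) (GP [y])"
  define s where "s = gm (GP ys') (GN xs')"
  have vt: "valid_gen t" unfolding t_def using gm_valid[of "GN xs" "GP [y]"] cons.prems by simp
  have vs: "valid_gen s" unfolding s_def using gm_valid[of "GP ys'" "GN xs'"] cons.prems cons.hyps by simp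
  have tP: "\<not> (\<exists>zs. t = GP zs)" using NN_type1[OF cons.prems(1), of y] unfolding t_def by auto
  have e1: "gm (GN xs) (GP (y # ys')) = gm t (GP ys')"
    unfolding t_def using assoc_easy[of "GN xs" "GP [y]" "GP ys'"] cons by simp
  have e2: "eqv (gm (gm t (GP ys')) (GN xs')) (gm t s)"
  proof (cases t)
    case (G0 c) then show ?thesis unfolding s_def
      using assoc_easy[of t "GP ys'" "GN xs'"] cons by (simp add: eqv_refl)
  next
    case (GN zs) then show ?thesis unfolding s_def using cons vt by simp
  next
    case (GP zs) then show ?thesis using tP by auto
  qed
  have e3: "eqv (gm t s) (gm (GN xs) (gm (GP [y]) s))"
  proof (cases s)
    case (GN zs) then show ?thesis unfolding t_def using NN_core1 cons.prems vs by simp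
  next
    case (G0 c) then show ?thesis unfolding t_def
      using assoc_easy[of "GN xs" "GP [y]" s] cons.prems by (simp add: eqv_refl)
  next
    case (GP zs) then show ?thesis unfolding t_def
      using assoc_easy[of "GN xs" "GP [y]" s] cons.prems vs by (simp add: eqv_refl)
  qed
  have e4: "gm (GP [y]) s = gm (GP (y # ys')) (GN xs')"
    unfolding s_def using assoc_easy[of "GP [y]" "GP ys'" "GN xs'"] cons by simp
  show ?case using e1 e2 e3 e4 by (metis eqv_trans)
qed

lemma assoc_all:
  assumes "valid_gen u" "valid_gen v" "valid_gen w"
  shows "eqv (gm (gm u v) w) (gm u (gm v w))"
proof (cases "hard u v w")
  case False then show ?thesis using assoc_easy assms eqv_eq by blast
next
  case True then show ?thesis using assms
    by (cases u; cases v; cases w) (auto simp del: gmult.simps intro: PP_hard0 NN_hard0 PP_PNP NN_PNP)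
qed

end


lemma fmult_nz:
  assumes "fmult gm f g w \<noteq> 0" shows "\<exists>u v. f u \<noteq> 0 \<and> g v \<noteq> 0 \<and> gm u v = w"
proof (rule ccontr)
  assume "\<not> ?thesis"
  then have e: "{(u, v). f u \<noteq> 0 \<and> g v \<noteq> 0 \<and> gm u v = w} = {}" by auto
  have "fmult gm f g w = 0" unfolding fmult_def by (simp only: e sum.empty)
  then show False using assms by simp
qed

lemma free_el_supp: "free_el f \<longleftrightarrow> supp_in valid_gen f"
  by (simp add: free_el_def supp_in_def fs_def)

theorem lemma2:
  fixes \<phi> :: "'k::field \<Rightarrow> 'a::ring_1"
    and lM :: "'a \<Rightarrow> 'm::ab_group_add \<Rightarrow> 'm" and rM :: "'m \<Rightarrow> 'a \<Rightarrow> 'm"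
    and lN :: "'a \<Rightarrow> 'n::ab_group_add \<Rightarrow> 'n" and rN :: "'n \<Rightarrow> 'a \<Rightarrow> 'n"
    and \<beta> :: "'m \<Rightarrow> 'n \<Rightarrow> 'a" and \<beta>' :: "'n \<Rightarrow> 'm \<Rightarrow> 'a"
  assumes "fin_dim_algebra \<phi>"
    and "bimodule \<phi> lM rM"
    and "bimodule \<phi> lN rN"
    and "bonded lM rM lN rN \<beta> \<beta>'"
  shows
    \<comment> \<open>the product of generators is homogeneous: degree i1 times degree i2 lands in degree i1+i2\<close>
    "(\<forall>u v. valid_gen u \<longrightarrow> valid_gen v \<longrightarrow>
        valid_gen (gmult lM rM lN rN \<beta> \<beta>' u v) \<and>
        gdeg (gmult lM rM lN rN \<beta> \<beta>' u v) = gdeg u + gdeg v)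
   \<and> (\<forall>f g. free_el f \<longrightarrow> free_el g \<longrightarrow>
        free_el (fmult (gmult lM rM lN rN \<beta> \<beta>') f g))
   \<comment> \<open>biadditivity\<close>
   \<and> (\<forall>f g h. free_el f \<longrightarrow> free_el g \<longrightarrow> free_el h \<longrightarrow>
        fmult (gmult lM rM lN rN \<beta> \<beta>') (fadd f g) h
          = fadd (fmult (gmult lM rM lN rN \<beta> \<beta>') f h) (fmult (gmult lM rM lN rN \<beta> \<beta>') g h)
      \<and> fmult (gmult lM rM lN rN \<beta> \<beta>') h (fadd f g)
          = fadd (fmult (gmult lM rM lN rN \<beta> \<beta>') h f) (fmult (gmult lM rM lN rN \<beta> \<beta>') h g))
   \<comment> \<open>the product descends to the quotient (relations form a two-sided ideal)\<close>
   \<and> (\<forall>f g. f \<in> zspan (tensor_rels lM rM lN rN) \<longrightarrow> free_el g \<longrightarrow>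
        fmult (gmult lM rM lN rN \<beta> \<beta>') f g \<in> zspan (tensor_rels lM rM lN rN) \<and>
        fmult (gmult lM rM lN rN \<beta> \<beta>') g f \<in> zspan (tensor_rels lM rM lN rN))
   \<comment> \<open>associativity in the quotient\<close>
   \<and> (\<forall>f g h. free_el f \<longrightarrow> free_el g \<longrightarrow> free_el h \<longrightarrow>
        fdiff (fmult (gmult lM rM lN rN \<beta> \<beta>') (fmult (gmult lM rM lN rN \<beta> \<beta>') f g) h)
              (fmult (gmult lM rM lN rN \<beta> \<beta>') f (fmult (gmult lM rM lN rN \<beta> \<beta>') g h))
          \<in> zspan (tensor_rels lM rM lN rN))
   \<comment> \<open>1 of A (in degree 0) is a two-sided unit in the quotient\<close>
   \<and> (\<forall>f. free_el f \<longrightarrow>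
        fdiff (fmult (gmult lM rM lN rN \<beta> \<beta>') (single (G0 1)) f) f \<in> zspan (tensor_rels lM rM lN rN) \<and>
        fdiff (fmult (gmult lM rM lN rN \<beta> \<beta>') f (single (G0 1))) f \<in> zspan (tensor_rels lM rM lN rN))
   \<comment> \<open>the scalars k (via A in degree 0) are central, so the quotient is a k-algebra\<close>
   \<and> (\<forall>c f. free_el f \<longrightarrow>
        fdiff (fmult (gmult lM rM lN rN \<beta> \<beta>') (single (G0 (\<phi> c))) f)
              (fmult (gmult lM rM lN rN \<beta> \<beta>') f (single (G0 (\<phi> c))))
          \<in> zspan (tensor_rels lM rM lN rN))"
  proof -
  have bM: "bimodule \<phi> lM rM" and bN: "bimodule \<phi> lN rN" and bd: "bonded lM rM lN rN \<beta> \<beta>'"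
    using assms by auto
  have ka: "k_algebra \<phi>" using assms(1) by (simp add: fin_dim_algebra_def)
  interpret bsetup lM rM lN rN \<beta> \<beta>'
    using bM bN bd unfolding bimodule_def bonded_def bimod_pairing_def
    by unfold_locales auto
  let ?R = "tensor_rels lM rM lN rN"
  have c1: "\<forall>u v. valid_gen u \<longrightarrow> valid_gen v \<longrightarrow>
        valid_gen (gm u v) \<and> gdeg (gm u v) = gdeg u + gdeg v"
    using gm_valid by blast
  have c2: "\<forall>f g. free_el f \<longrightarrow> free_el g \<longrightarrow> free_el (fmult gm f g)"
  proof (intro allI impI)
    fix f g :: "('a, 'm, 'n) gen \<Rightarrow> int"
    assume f: "free_el f" and g: "free_el g"
    have "fs (fmult gm f g)" using f g by (intro fs_fmult) (auto simp: free_el_def fs_def)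
    moreover have "valid_gen w" if "fmult gm f g w \<noteq> 0" for w
      using fmult_nz[OF that] f g gm_valid unfolding free_el_def by blast
    ultimately show "free_el (fmult gm f g)" by (auto simp: free_el_def fs_def)
  qed
  have c3: "\<forall>f g h. free_el f \<longrightarrow> free_el g \<longrightarrow> free_el h \<longrightarrow>
        fmult gm (fadd f g) h = fadd (fmult gm f h) (fmult gm g h)
      \<and> fmult gm h (fadd f g) = fadd (fmult gm h f) (fmult gm h g)"
    by (auto simp: fadd_eq free_el_def fs_def[symmetric] fmult_add1 fmult_add2)
  have c4: "\<forall>f g. f \<in> Z \<longrightarrow> free_el g \<longrightarrow> fmult gm f g \<in> Z \<and> fmult gm g f \<in> Z"
    using ideal_gen[of ?R valid_gen gm] rels_fs ideal_H by (auto simp: free_el_supp)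
  have c5: "\<forall>f g h. free_el f \<longrightarrow> free_el g \<longrightarrow> free_el h \<longrightarrow>
        fdiff (fmult gm (fmult gm f g) h) (fmult gm f (fmult gm g h)) \<in> Z"
    using assoc_gen[of valid_gen gm ?R] assoc_all unfolding eqv_def fdiff_eq free_el_supp by blast
  have c6: "\<forall>f. free_el f \<longrightarrow>
        fdiff (fmult gm (single (G0 1)) f) f \<in> Z \<and> fdiff (fmult gm f (single (G0 1))) f \<in> Z"
  proof (intro allI impI conjI)
    fix f :: "('a, 'm, 'n) gen \<Rightarrow> int"
    assume f: "free_el f"
    have H1: "\<And>v. valid_gen v \<Longrightarrow> single (gm (G0 1) v) - single v \<in> Z"
      by (simp add: unitL zspan_0)
    have H2: "\<And>v. valid_gen v \<Longrightarrow> single (gm v (G0 1)) - single v \<in> Z"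
      by (simp add: unitR zspan_0)
    show "fdiff (fmult gm (single (G0 1)) f) f \<in> Z"
      using unit_left_gen[of valid_gen gm "G0 1" ?R f, OF H1] f unfolding fdiff_eq free_el_supp by blast
    show "fdiff (fmult gm f (single (G0 1))) f \<in> Z"
      using unit_right_gen[of valid_gen gm "G0 1" ?R f, OF H2] f unfolding fdiff_eq free_el_supp by blast
  qed
  have c7: "\<forall>c f. free_el f \<longrightarrow>
        fdiff (fmult gm (single (G0 (\<phi> c))) f) (fmult gm f (single (G0 (\<phi> c)))) \<in> Z"
  proof (intro allI impI)
    fix c and f :: "('a, 'm, 'n) gen \<Rightarrow> int"
    assume f: "free_el f"
    have p1: "\<And>z. lM (\<phi> c) z = rM z (\<phi> c)" using bM by (simp add: bimodule_def)
    have p2: "\<And>z. lN (\<phi> c) z = rN z (\<phi> c)" using bN by (simp add: bimodule_def)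
    have p3: "\<And>a. \<phi> c * a = a * \<phi> c" using ka by (simp add: k_algebra_def)
    show "fdiff (fmult gm (single (G0 (\<phi> c))) f) (fmult gm f (single (G0 (\<phi> c)))) \<in> Z"
      using central_gen[of valid_gen gm "G0 (\<phi> c)" ?R f] central[OF p1 p2 p3] f
      unfolding fdiff_eq free_el_supp eqv_def by blast
  qed
  show ?thesis using c1 c2 c3 c4 c5 c6 c7 by blast
qed

end
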